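(* Let $(G,\cdot)$ be a group and $\psi\in\operatorname{End}(G,\cdot)$. (1) If $\psi([\psi(G),G])\le Z(G,\cdot)$, then each of the following maps $G\times G\to G\times G$ defines a set-theoretic non-degenerate solution of the Yang--Baxter equation on $G$: $$r_1(g,h)=\big(\psi(g)\,h\,\psi(g)^{-1},\ \psi(h^{-1}g)\,h^{-1}\psi(g)^{-1}g\,\psi(g)\,h\,\psi(g^{-1}h)\big);$$ $$r_2(g,h)=\big(g\,\psi(g)\,h\,\psi(g)^{-1}g^{-1},\ \psi(g h^{-1}g^{-1})\,g\,\psi(g h g^{-1})\big).$$ These two are mutually inverse and coincide if and only if $(G,\cdot)$ is abelian. (2) If moreover $\psi([G,G])\le Z(G,\cdot)$, then also $$r_3(g,h)=\big(\psi(g)^{-1}h\,\psi(g),\ \psi(g)^{-1}h^{-1}\psi(g)\,g\,h\big);$$ $$r_4(g,h)=\big(g\,h\,\psi(h)\,g^{-1}\psi(h)^{-1},\ \psi(h)\,g\,\psi(h)^{-1}\big)$$ define set-theoretic non-degenerate solutions of the Yang--Baxter equation; they are mutually inverse and coincide if and only if $g\,\psi(g)\,h\,\psi(g)^{-1}=h\,\psi(h)\,g\,\psi(h)^{-1}$ for all $g,h\in G$.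
   Context: All products are in $(G,\cdot)$; $\psi(G)$ is the image of $\psi$; $[x,y]=xyx^{-1}y^{-1}$ and $[A,B]$ is the subgroup generated by $[a,b]$, $a\in A,b\in B$; $Z(G,\cdot)$ is the centre. A set-theoretic solution of the Yang--Baxter equation is a pair $(X,r)$ with $X\neq\emptyset$ and $r\colon X\times X\to X\times X$, $r(x,y)=(\sigma_x(y),\tau_y(x))$, a bijection satisfying $(r\times\mathrm{id}_X)(\mathrm{id}_X\times r)(r\times\mathrm{id}_X)=(\mathrm{id}_X\times r)(r\times\mathrm{id}_X)(\mathrm{id}_X\times r)$; it is non-degenerate if all $\sigma_x$ and $\tau_x$ are bijective. *)

theory Defs
  imports "HOL-Algebra.Algebra"
begin

definition r12 :: "('a \<times> 'a \<Rightarrow> 'a \<times> 'a) \<Rightarrow> 'a \<times> 'a \<times> 'a \<Rightarrow> 'a \<times> 'a \<times> 'a" where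
  "r12 r t = (case t of (x, y, z) \<Rightarrow> (fst (r (x, y)), snd (r (x, y)), z))"

definition r23 :: "('a \<times> 'a \<Rightarrow> 'a \<times> 'a) \<Rightarrow> 'a \<times> 'a \<times> 'a \<Rightarrow> 'a \<times> 'a \<times> 'a" where
  "r23 r t = (case t of (x, y, z) \<Rightarrow> (x, fst (r (y, z)), snd (r (y, z))))"

definition ybe_solution :: "'a set \<Rightarrow> ('a \<times> 'a \<Rightarrow> 'a \<times> 'a) \<Rightarrow> bool" where
  "ybe_solution S r \<longleftrightarrow> S \<noteq> {} \<and> bij_betw r (S \<times> S) (S \<times> S) \<and>
     (\<forall>x\<in>S. \<forall>y\<in>S. \<forall>z\<in>S.
        r12 r (r23 r (r12 r (x, y, z))) = r23 r (r12 r (r23 r (x, y, z))))"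

text \<open>r(x,y) = (sigma_x(y), tau_y(x)); non-degenerate: all sigma_x, tau_x bijective on S.\<close>
definition ybe_nondegenerate :: "'a set \<Rightarrow> ('a \<times> 'a \<Rightarrow> 'a \<times> 'a) \<Rightarrow> bool" where
  "ybe_nondegenerate S r \<longleftrightarrow>
     (\<forall>x\<in>S. bij_betw (\<lambda>y. fst (r (x, y))) S S) \<and>
     (\<forall>x\<in>S. bij_betw (\<lambda>y. snd (r (y, x))) S S)"

definition nd_ybe_solution :: "'a set \<Rightarrow> ('a \<times> 'a \<Rightarrow> 'a \<times> 'a) \<Rightarrow> bool" where
  "nd_ybe_solution S r \<longleftrightarrow> ybe_solution S r \<and> ybe_nondegenerate S r"

definition grp_center :: "('a, 'b) monoid_scheme \<Rightarrow> 'a set" where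
  "grp_center G = {z \<in> carrier G. \<forall>x\<in>carrier G. z \<otimes>\<^bsub>G\<^esub> x = x \<otimes>\<^bsub>G\<^esub> z}"

definition comm_subgroup :: "('a, 'b) monoid_scheme \<Rightarrow> 'a set \<Rightarrow> 'a set \<Rightarrow> 'a set" where
  "comm_subgroup G A B = generate G
     {a \<otimes>\<^bsub>G\<^esub> b \<otimes>\<^bsub>G\<^esub> inv\<^bsub>G\<^esub> a \<otimes>\<^bsub>G\<^esub> inv\<^bsub>G\<^esub> b | a b. a \<in> A \<and> b \<in> B}"

definition yb_r1 :: "('a, 'b) monoid_scheme \<Rightarrow> ('a \<Rightarrow> 'a) \<Rightarrow> 'a \<times> 'a \<Rightarrow> 'a \<times> 'a" where
  "yb_r1 G \<psi> p = (case p of (g, h) \<Rightarrow>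
     (\<psi> g \<otimes>\<^bsub>G\<^esub> h \<otimes>\<^bsub>G\<^esub> inv\<^bsub>G\<^esub> (\<psi> g),
      \<psi> (inv\<^bsub>G\<^esub> h \<otimes>\<^bsub>G\<^esub> g) \<otimes>\<^bsub>G\<^esub> inv\<^bsub>G\<^esub> h \<otimes>\<^bsub>G\<^esub> inv\<^bsub>G\<^esub> (\<psi> g) \<otimes>\<^bsub>G\<^esub> g
        \<otimes>\<^bsub>G\<^esub> \<psi> g \<otimes>\<^bsub>G\<^esub> h \<otimes>\<^bsub>G\<^esub> \<psi> (inv\<^bsub>G\<^esub> g \<otimes>\<^bsub>G\<^esub> h)))"

definition yb_r2 :: "('a, 'b) monoid_scheme \<Rightarrow> ('a \<Rightarrow> 'a) \<Rightarrow> 'a \<times> 'a \<Rightarrow> 'a \<times> 'a" where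
  "yb_r2 G \<psi> p = (case p of (g, h) \<Rightarrow>
     (g \<otimes>\<^bsub>G\<^esub> \<psi> g \<otimes>\<^bsub>G\<^esub> h \<otimes>\<^bsub>G\<^esub> inv\<^bsub>G\<^esub> (\<psi> g) \<otimes>\<^bsub>G\<^esub> inv\<^bsub>G\<^esub> g,
      \<psi> (g \<otimes>\<^bsub>G\<^esub> inv\<^bsub>G\<^esub> h \<otimes>\<^bsub>G\<^esub> inv\<^bsub>G\<^esub> g) \<otimes>\<^bsub>G\<^esub> g
        \<otimes>\<^bsub>G\<^esub> \<psi> (g \<otimes>\<^bsub>G\<^esub> h \<otimes>\<^bsub>G\<^esub> inv\<^bsub>G\<^esub> g)))"

definition yb_r3 :: "('a, 'b) monoid_scheme \<Rightarrow> ('a \<Rightarrow> 'a) \<Rightarrow> 'a \<times> 'a \<Rightarrow> 'a \<times> 'a" where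
  "yb_r3 G \<psi> p = (case p of (g, h) \<Rightarrow>
     (inv\<^bsub>G\<^esub> (\<psi> g) \<otimes>\<^bsub>G\<^esub> h \<otimes>\<^bsub>G\<^esub> \<psi> g,
      inv\<^bsub>G\<^esub> (\<psi> g) \<otimes>\<^bsub>G\<^esub> inv\<^bsub>G\<^esub> h \<otimes>\<^bsub>G\<^esub> \<psi> g \<otimes>\<^bsub>G\<^esub> g \<otimes>\<^bsub>G\<^esub> h))"

definition yb_r4 :: "('a, 'b) monoid_scheme \<Rightarrow> ('a \<Rightarrow> 'a) \<Rightarrow> 'a \<times> 'a \<Rightarrow> 'a \<times> 'a" where
  "yb_r4 G \<psi> p = (case p of (g, h) \<Rightarrow>
     (g \<otimes>\<^bsub>G\<^esub> h \<otimes>\<^bsub>G\<^esub> \<psi> h \<otimes>\<^bsub>G\<^esub> inv\<^bsub>G\<^esub> g \<otimes>\<^bsub>G\<^esub> inv\<^bsub>G\<^esub> (\<psi> h),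
      \<psi> h \<otimes>\<^bsub>G\<^esub> g \<otimes>\<^bsub>G\<^esub> inv\<^bsub>G\<^esub> (\<psi> h)))"

end

theory Submission
  imports Defs
begin

lemma (in group) lcancel: "x \<in> carrier G \<Longrightarrow> y \<in> carrier G \<Longrightarrow> z \<in> carrier G \<Longrightarrow> x \<otimes> y = x \<otimes> z \<Longrightarrow> y = z"
  by (metis Units_eq Units_l_cancel)

lemma abstract_ybe:
  fixes H (structure) and \<sigma> \<tau> :: "'a \<Rightarrow> 'a \<Rightarrow> 'a" and r
  assumes grp: "group H"
    and cl: "\<And>x y. x \<in> carrier H \<Longrightarrow> y \<in> carrier H \<Longrightarrow> \<sigma> x y \<in> carrier H"
    and cl2: "\<And>x y. x \<in> carrier H \<Longrightarrow> y \<in> carrier H \<Longrightarrow> \<tau> y x \<in> carrier H"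
    and act: "\<And>x y z. x \<in> carrier H \<Longrightarrow> y \<in> carrier H \<Longrightarrow> z \<in> carrier H \<Longrightarrow> \<sigma> x (\<sigma> y z) = \<sigma> (x \<otimes> y) z"
    and pres: "\<And>x y. x \<in> carrier H \<Longrightarrow> y \<in> carrier H \<Longrightarrow> \<sigma> x y \<otimes> \<tau> y x = x \<otimes> y"
    and c2: "\<And>x y z. x \<in> carrier H \<Longrightarrow> y \<in> carrier H \<Longrightarrow> z \<in> carrier H \<Longrightarrow> \<sigma> x (y \<otimes> z) = \<sigma> x y \<otimes> \<sigma> (\<tau> y x) z"
    and se: "\<And>z. z \<in> carrier H \<Longrightarrow> \<sigma> \<one> z = z"
    and te: "\<And>z. z \<in> carrier H \<Longrightarrow> \<tau> \<one> z = z"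
    and rdef: "\<And>x y. r (x, y) = (\<sigma> x y, \<tau> y x)"
  shows "(\<forall>x\<in>carrier H. \<forall>y\<in>carrier H. \<forall>z\<in>carrier H.
        r12 r (r23 r (r12 r (x, y, z))) = r23 r (r12 r (r23 r (x, y, z))))
      \<and> ybe_nondegenerate (carrier H) r"
proof -
  interpret H: group H by (rule grp)
  have tact: "\<tau> z (\<tau> y x) = \<tau> (y \<otimes> z) x"
    if xyz: "x \<in> carrier H" "y \<in> carrier H" "z \<in> carrier H" for x y z
  proof -
    define u where "u = \<sigma> x y"
    define v where "v = \<tau> y x"
    define p where "p = \<sigma> v z"
    define w where "w = \<tau> z v"
    define w' where "w' = \<tau> (y \<otimes> z) x"
    have C: "u \<in> carrier H" "v \<in> carrier H" "p \<in> carrier H" "w \<in> carrier H" "w' \<in> carrier H"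
      using xyz cl cl2 by (auto simp: u_def v_def p_def w_def w'_def)
    have 1: "\<sigma> x (y \<otimes> z) \<otimes> w' = x \<otimes> (y \<otimes> z)" using pres[of x "y \<otimes> z"] xyz by (simp add: w'_def)
    have 2: "\<sigma> x (y \<otimes> z) = u \<otimes> p" using c2 xyz by (simp add: u_def p_def v_def)
    have 3: "p \<otimes> w = v \<otimes> z" using pres[of v z] C xyz by (simp add: p_def w_def)
    have 4: "u \<otimes> v = x \<otimes> y" using pres xyz by (simp add: u_def v_def)
    have "(u \<otimes> p) \<otimes> w = x \<otimes> (y \<otimes> z)"
      using C xyz 3 4 by (metis H.m_assoc)
    hence "(u \<otimes> p) \<otimes> w = (u \<otimes> p) \<otimes> w'" using 1 2 by simp
    hence "w = w'" using H.lcancel[OF H.m_closed[OF C(1) C(3)] C(4) C(5)] by blast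
    thus ?thesis by (simp add: w_def w'_def v_def)
  qed
  have braid: "r12 r (r23 r (r12 r (x, y, z))) = r23 r (r12 r (r23 r (x, y, z)))"
    if xyz: "x \<in> carrier H" "y \<in> carrier H" "z \<in> carrier H" for x y z
  proof -
    define a1 where "a1 = \<sigma> (\<sigma> x y) (\<sigma> (\<tau> y x) z)"
    define b1 where "b1 = \<tau> (\<sigma> (\<tau> y x) z) (\<sigma> x y)"
    define c1 where "c1 = \<tau> z (\<tau> y x)"
    define a2 where "a2 = \<sigma> x (\<sigma> y z)"
    define b2 where "b2 = \<sigma> (\<tau> (\<sigma> y z) x) (\<tau> z y)"
    define c2' where "c2' = \<tau> (\<tau> z y) (\<tau> (\<sigma> y z) x)"
    have L: "r12 r (r23 r (r12 r (x, y, z))) = (a1, b1, c1)"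
      by (simp add: r12_def r23_def rdef a1_def b1_def c1_def)
    have R: "r23 r (r12 r (r23 r (x, y, z))) = (a2, b2, c2')"
      by (simp add: r12_def r23_def rdef a2_def b2_def c2'_def)
    have ca: "a1 = a2" unfolding a1_def a2_def using xyz cl cl2 by (simp add: act pres)
    have cc: "c1 = c2'" unfolding c1_def c2'_def using xyz cl cl2 by (simp add: tact pres)
    have CC: "a1 \<in> carrier H" "b1 \<in> carrier H" "c1 \<in> carrier H" "b2 \<in> carrier H" "c2' \<in> carrier H"
      using xyz cl cl2 by (auto simp: a1_def b1_def c1_def b2_def c2'_def)
    have p1: "a1 \<otimes> b1 \<otimes> c1 = x \<otimes> y \<otimes> z"
    proof -
      have "a1 \<otimes> b1 = \<sigma> x y \<otimes> \<sigma> (\<tau> y x) z" unfolding a1_def b1_def using xyz cl cl2 by (simp add: pres)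
      hence "a1 \<otimes> b1 \<otimes> c1 = \<sigma> x y \<otimes> (\<sigma> (\<tau> y x) z \<otimes> \<tau> z (\<tau> y x))"
        using xyz cl cl2 by (simp add: H.m_assoc c1_def)
      also have "\<dots> = \<sigma> x y \<otimes> (\<tau> y x \<otimes> z)" using xyz cl cl2 by (simp add: pres)
      also have "\<dots> = x \<otimes> y \<otimes> z" using xyz cl cl2 by (simp add: pres flip: H.m_assoc)
      finally show ?thesis .
    qed
    have p2: "a2 \<otimes> b2 \<otimes> c2' = x \<otimes> y \<otimes> z"
    proof -
      have "b2 \<otimes> c2' = \<tau> (\<sigma> y z) x \<otimes> \<tau> z y" unfolding b2_def c2'_def using xyz cl cl2 by (simp add: pres)
      hence "a2 \<otimes> b2 \<otimes> c2' = \<sigma> x (\<sigma> y z) \<otimes> \<tau> (\<sigma> y z) x \<otimes> \<tau> z y"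
        using xyz cl cl2 CC by (simp add: H.m_assoc a2_def)
      also have "\<dots> = x \<otimes> (\<sigma> y z \<otimes> \<tau> z y)" using xyz cl cl2 by (simp add: pres H.m_assoc)
      also have "\<dots> = x \<otimes> y \<otimes> z" using xyz cl cl2 by (simp add: pres H.m_assoc)
      finally show ?thesis .
    qed
    have "a1 \<otimes> (b1 \<otimes> c1) = a1 \<otimes> (b2 \<otimes> c1)"
      using p1 p2 ca cc CC by (simp add: H.m_assoc)
    hence "b1 \<otimes> c1 = b2 \<otimes> c1" using H.lcancel[OF CC(1) H.m_closed[OF CC(2) CC(3)] H.m_closed[OF CC(4) CC(3)]] by blast
    hence "b1 = b2" using CC by simp
    thus ?thesis using L R ca cc by simp
  qed
  have nd1: "bij_betw (\<lambda>y. fst (r (x, y))) (carrier H) (carrier H)" if x: "x \<in> carrier H" for x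
  proof -
    have xi: "inv x \<in> carrier H" using x by simp
    show ?thesis
      apply (rule bij_betw_byWitness[where f'="\<sigma> (inv x)"])
      using x xi cl by (auto simp: rdef act se)
  qed
  have nd2: "bij_betw (\<lambda>y. snd (r (y, x))) (carrier H) (carrier H)" if x: "x \<in> carrier H" for x
  proof -
    have xi: "inv x \<in> carrier H" using x by simp
    show ?thesis
      apply (rule bij_betw_byWitness[where f'="\<tau> (inv x)"])
      using x xi cl2 by (auto simp: rdef tact te)
  qed
  show ?thesis using braid nd1 nd2 by (auto simp: ybe_nondegenerate_def)
qed


lemma r12_cancel:
  assumes c: "\<And>x y. x \<in> S \<Longrightarrow> y \<in> S \<Longrightarrow> f (g (x, y)) = (x, y)"
    and cl: "\<And>x y. x \<in> S \<Longrightarrow> y \<in> S \<Longrightarrow> g (x, y) \<in> S \<times> S"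
    and t: "t \<in> S \<times> S \<times> S"
  shows "r12 f (r12 g t) = t" "r12 g t \<in> S \<times> S \<times> S"
    "r23 f (r23 g t) = t" "r23 g t \<in> S \<times> S \<times> S"
proof -
  obtain a b d where t': "t = (a, b, d)" "a \<in> S" "b \<in> S" "d \<in> S" using t by auto
  obtain p q where pq: "g (a, b) = (p, q)" by (cases "g (a, b)")
  obtain p' q' where pq': "g (b, d) = (p', q')" by (cases "g (b, d)")
  have "f (p, q) = (a, b)" "p \<in> S" "q \<in> S" using c[of a b] cl[of a b] pq t' by auto
  moreover have "f (p', q') = (b, d)" "p' \<in> S" "q' \<in> S" using c[of b d] cl[of b d] pq' t' by auto
  ultimately show "r12 f (r12 g t) = t" "r12 g t \<in> S \<times> S \<times> S"
    "r23 f (r23 g t) = t" "r23 g t \<in> S \<times> S \<times> S"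
    using t' pq pq' by (auto simp: r12_def r23_def)
qed

lemma inverse_solution:
  assumes sol: "nd_ybe_solution S r"
    and cl: "\<And>x y. x \<in> S \<Longrightarrow> y \<in> S \<Longrightarrow> r' (x, y) \<in> S \<times> S"
    and i1: "\<And>x y. x \<in> S \<Longrightarrow> y \<in> S \<Longrightarrow> r (r' (x, y)) = (x, y)"
    and i2: "\<And>x y. x \<in> S \<Longrightarrow> y \<in> S \<Longrightarrow> r' (r (x, y)) = (x, y)"
  shows "nd_ybe_solution S r'"
proof -
  have ne: "S \<noteq> {}" and bij: "bij_betw r (S \<times> S) (S \<times> S)"
    and br: "\<And>x y z. x \<in> S \<Longrightarrow> y \<in> S \<Longrightarrow> z \<in> S \<Longrightarrow>
        r12 r (r23 r (r12 r (x, y, z))) = r23 r (r12 r (r23 r (x, y, z)))"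
    and nd1: "\<And>x. x \<in> S \<Longrightarrow> bij_betw (\<lambda>y. fst (r (x, y))) S S"
    and nd2: "\<And>x. x \<in> S \<Longrightarrow> bij_betw (\<lambda>y. snd (r (y, x))) S S"
    using sol by (auto simp: nd_ybe_solution_def ybe_solution_def ybe_nondegenerate_def)
  have clr: "\<And>x y. x \<in> S \<Longrightarrow> y \<in> S \<Longrightarrow> r (x, y) \<in> S \<times> S"
    using bij by (auto simp: bij_betw_def)
  note A = r12_cancel[of S r r', OF i1 cl] and B = r12_cancel[of S r' r, OF i2 clr]
  have br': "r12 r' (r23 r' (r12 r' (x, y, z))) = r23 r' (r12 r' (r23 r' (x, y, z)))"
    if xyz: "x \<in> S" "y \<in> S" "z \<in> S" for x y z
  proof -
    define s where "s = (x, y, z)"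
    have s: "s \<in> S \<times> S \<times> S" using xyz by (simp add: s_def)
    define t where "t = r23 r' (r12 r' (r23 r' s))"
    have t: "t \<in> S \<times> S \<times> S" using s by (simp add: t_def A)
    have Rt: "r23 r (r12 r (r23 r t)) = s" using s by (simp add: t_def A)
    obtain a b d where abd: "t = (a, b, d)" "a \<in> S" "b \<in> S" "d \<in> S" using t by auto
    have Lt: "r12 r (r23 r (r12 r t)) = s" using Rt br abd by simp
    have "r12 r' (r23 r' (r12 r' s)) = t"
      using t B by (simp flip: Lt)
    thus ?thesis by (simp add: s_def t_def)
  qed
  have bij': "bij_betw r' (S \<times> S) (S \<times> S)"
    by (rule bij_betw_byWitness[where f'=r]) (use cl clr i1 i2 in \<open>auto simp: image_subset_iff\<close>)
  have nd1': "bij_betw (\<lambda>v. fst (r' (u, v))) S S" if u: "u \<in> S" for u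
  proof (rule bij_betw_imageI)
    show "inj_on (\<lambda>v. fst (r' (u, v))) S"
    proof (rule inj_onI)
      fix v1 v2 assume v: "v1 \<in> S" "v2 \<in> S" and eq: "fst (r' (u, v1)) = fst (r' (u, v2))"
      obtain x y1 where e1: "r' (u, v1) = (x, y1)" by (cases "r' (u, v1)")
      obtain x2 y2 where e2: "r' (u, v2) = (x2, y2)" by (cases "r' (u, v2)")
      have x2: "x2 = x" using eq e1 e2 by simp
      have S: "x \<in> S" "y1 \<in> S" "y2 \<in> S" using cl[of u v1] cl[of u v2] u v e1 e2 x2 by auto
      have r1: "r (x, y1) = (u, v1)" using i1[of u v1] u v e1 by simp
      have r2: "r (x, y2) = (u, v2)" using i1[of u v2] u v e2 x2 by simp
      have "fst (r (x, y1)) = fst (r (x, y2))" using r1 r2 by simp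
      hence "y1 = y2" using nd1[OF S(1)] S by (auto simp: bij_betw_def inj_on_def)
      thus "v1 = v2" using r1 r2 by simp
    qed
    show "(\<lambda>v. fst (r' (u, v))) ` S = S"
    proof
      show "(\<lambda>v. fst (r' (u, v))) ` S \<subseteq> S"
        using cl[OF u] by (simp add: image_subset_iff mem_Times_iff)
      show "S \<subseteq> (\<lambda>v. fst (r' (u, v))) ` S"
      proof
        fix x assume x: "x \<in> S"
        have "u \<in> (\<lambda>y. fst (r (x, y))) ` S" using nd1[OF x] u by (simp add: bij_betw_def)
        then obtain y where y: "y \<in> S" "fst (r (x, y)) = u" by (auto simp: image_iff)
        define v where "v = snd (r (x, y))"
        have v: "v \<in> S" using clr[OF x y(1)] by (auto simp: v_def mem_Times_iff)
        have "r (x, y) = (u, v)" using y by (simp add: v_def prod_eq_iff)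
        hence "r' (u, v) = (x, y)" using i2[OF x y(1)] by simp
        thus "x \<in> (\<lambda>v. fst (r' (u, v))) ` S" using v by force
      qed
    qed
  qed
  have nd2': "bij_betw (\<lambda>u. snd (r' (u, v))) S S" if v: "v \<in> S" for v
  proof (rule bij_betw_imageI)
    show "inj_on (\<lambda>u. snd (r' (u, v))) S"
    proof (rule inj_onI)
      fix u1 u2 assume u: "u1 \<in> S" "u2 \<in> S" and eq: "snd (r' (u1, v)) = snd (r' (u2, v))"
      obtain x1 y where e1: "r' (u1, v) = (x1, y)" by (cases "r' (u1, v)")
      obtain x2 y2 where e2: "r' (u2, v) = (x2, y2)" by (cases "r' (u2, v)")
      have y2: "y2 = y" using eq e1 e2 by simp
      have S: "x1 \<in> S" "x2 \<in> S" "y \<in> S" using cl[of u1 v] cl[of u2 v] u v e1 e2 y2 by auto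
      have r1: "r (x1, y) = (u1, v)" using i1[of u1 v] u v e1 by simp
      have r2: "r (x2, y) = (u2, v)" using i1[of u2 v] u v e2 y2 by simp
      have "snd (r (x1, y)) = snd (r (x2, y))" using r1 r2 by simp
      hence "x1 = x2" using nd2[OF S(3)] S by (auto simp: bij_betw_def inj_on_def)
      thus "u1 = u2" using r1 r2 by simp
    qed
    show "(\<lambda>u. snd (r' (u, v))) ` S = S"
    proof
      show "(\<lambda>u. snd (r' (u, v))) ` S \<subseteq> S"
        using cl[OF _ v] by (simp add: image_subset_iff mem_Times_iff)
      show "S \<subseteq> (\<lambda>u. snd (r' (u, v))) ` S"
      proof
        fix y assume y: "y \<in> S"
        have "v \<in> (\<lambda>x. snd (r (x, y))) ` S" using nd2[OF y] v by (simp add: bij_betw_def)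
        then obtain x where x: "x \<in> S" "snd (r (x, y)) = v" by (auto simp: image_iff)
        define u where "u = fst (r (x, y))"
        have u: "u \<in> S" using clr[OF x(1) y] by (auto simp: u_def mem_Times_iff)
        have "r (x, y) = (u, v)" using x by (simp add: u_def prod_eq_iff)
        hence "r' (u, v) = (x, y)" using i2[OF x(1) y] by simp
        thus "y \<in> (\<lambda>u. snd (r' (u, v))) ` S" using u by force
      qed
    qed
  qed
  show ?thesis using ne bij' br' nd1' nd2'
    by (auto simp: nd_ybe_solution_def ybe_solution_def ybe_nondegenerate_def)
qed


locale ybg = group G for G (structure) +
  fixes \<psi> :: "'a \<Rightarrow> 'a"
  assumes hom: "\<psi> \<in> hom G G"
    and K1: "\<And>a b. a \<in> carrier G \<Longrightarrow> b \<in> carrier G \<Longrightarrow>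
       \<psi> (\<psi> a \<otimes> b \<otimes> inv (\<psi> a) \<otimes> inv\<^bsub>G\<^esub> b) \<in> grp_center G"

sublocale ybg \<subseteq> group_hom G G \<psi>
  by (rule group_hom.intro, unfold_locales, rule hom)

context ybg
begin

lemma cm [simp]: "x \<in> carrier G \<Longrightarrow> x \<otimes> (inv x \<otimes> y) = y" "x \<in> carrier G \<Longrightarrow> inv x \<otimes> (x \<otimes> y) = y"
  if "y \<in> carrier G" for x y
  using that by (simp_all flip: m_assoc)

lemmas gs = m_assoc inv_mult_group

lemma Zc: "k \<in> grp_center G \<Longrightarrow> k \<in> carrier G" by (simp add: grp_center_def)
lemma Zcomm: "k \<in> grp_center G \<Longrightarrow> x \<in> carrier G \<Longrightarrow> k \<otimes> x = x \<otimes> k" by (simp add: grp_center_def)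

lemma conjZ:
  assumes k: "k \<in> grp_center G" and C: "a \<in> carrier G" "b \<in> carrier G" "z \<in> carrier G"
    and c: "c = a \<otimes> k \<otimes> b"
  shows "c \<otimes> z \<otimes> inv c = a \<otimes> b \<otimes> z \<otimes> inv (a \<otimes> b)"
proof -
  have kc: "k \<in> carrier G" using k by (rule Zc)
  have "c \<otimes> z \<otimes> inv c = a \<otimes> (k \<otimes> (b \<otimes> z \<otimes> inv b)) \<otimes> inv k \<otimes> inv a"
    using C kc by (simp add: c gs)
  also have "\<dots> = a \<otimes> ((b \<otimes> z \<otimes> inv b) \<otimes> k) \<otimes> inv k \<otimes> inv a"
  proof -
    have e: "k \<otimes> (b \<otimes> z \<otimes> inv b) = (b \<otimes> z \<otimes> inv b) \<otimes> k" using C by (intro Zcomm[OF k]) simp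
    show ?thesis by (simp only: e)
  qed
  also have "\<dots> = a \<otimes> b \<otimes> z \<otimes> inv (a \<otimes> b)"
    using C kc by (simp add: gs)
  finally show ?thesis .
qed

lemma Z1: "a \<in> carrier G \<Longrightarrow> b \<in> carrier G \<Longrightarrow>
   \<psi> (\<psi> a) \<otimes> \<psi> b \<otimes> inv (\<psi> (\<psi> a)) \<otimes> inv (\<psi> b) \<in> grp_center G"
  using K1[of a b] by simp

definition circ where "circ x y = x \<otimes> \<psi> x \<otimes> y \<otimes> inv (\<psi> x)"

lemma circ_closed [simp]: "x \<in> carrier G \<Longrightarrow> y \<in> carrier G \<Longrightarrow> circ x y \<in> carrier G"
  by (simp add: circ_def)

lemma circ_assoc:
  assumes C: "x \<in> carrier G" "y \<in> carrier G" "z \<in> carrier G"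
  shows "circ (circ x y) z = circ x (circ y z)"
proof -
  define u where "u = circ x y"
  have u: "u \<in> carrier G" using C by (simp add: u_def)
  have "circ u z = u \<otimes> (\<psi> u \<otimes> z \<otimes> inv (\<psi> u))" using C u by (simp add: circ_def gs)
  also have "\<psi> u \<otimes> z \<otimes> inv (\<psi> u) = \<psi> x \<otimes> \<psi> y \<otimes> z \<otimes> inv (\<psi> x \<otimes> \<psi> y)"
    by (rule conjZ[OF Z1[of x y]]) (use C in \<open>simp_all add: u_def circ_def gs\<close>)
  also have "u \<otimes> (\<psi> x \<otimes> \<psi> y \<otimes> z \<otimes> inv (\<psi> x \<otimes> \<psi> y)) = circ x (circ y z)"
    using C by (simp add: u_def circ_def gs)
  finally show ?thesis by (simp add: u_def)
qed

lemma circ_one [simp]: "x \<in> carrier G \<Longrightarrow> circ \<one> x = x" "x \<in> carrier G \<Longrightarrow> circ x \<one> = x"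
  by (simp_all add: circ_def gs)

lemma circ_lcancel: "a \<in> carrier G \<Longrightarrow> b \<in> carrier G \<Longrightarrow> c \<in> carrier G \<Longrightarrow> circ a b = circ a c \<Longrightarrow> b = c"
  by (simp add: circ_def)

lemma circ_group: "group \<lparr>carrier = carrier G, monoid.mult = circ, one = \<one>\<rparr>"
proof (rule groupI, simp_all add: circ_assoc)
  fix x assume x: "x \<in> carrier G"
  define y where "y = inv (\<psi> x) \<otimes> inv x \<otimes> \<psi> x"
  define z where "z = inv (\<psi> y) \<otimes> inv y \<otimes> \<psi> y"
  have yz: "y \<in> carrier G" "z \<in> carrier G" using x by (simp_all add: y_def z_def)
  have xy: "circ x y = \<one>" using x by (simp add: y_def circ_def gs)
  have yzz: "circ y z = \<one>" using yz by (simp add: z_def circ_def gs)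
  have "x = circ x (circ y z)" using x by (simp add: yzz)
  also have "\<dots> = z" using x yz by (simp add: xy flip: circ_assoc)
  finally have "circ y x = \<one>" using yzz by simp
  thus "\<exists>y\<in>carrier G. circ y x = \<one>" using yz by blast
qed

abbreviation "s1 x y \<equiv> fst (yb_r1 G \<psi> (x, y))"
abbreviation "t1 y x \<equiv> snd (yb_r1 G \<psi> (x, y))"
abbreviation "s2 x y \<equiv> fst (yb_r2 G \<psi> (x, y))"
abbreviation "t2 y x \<equiv> snd (yb_r2 G \<psi> (x, y))"

lemma s1_eq: "s1 x y = \<psi> x \<otimes> y \<otimes> inv (\<psi> x)" by (simp add: yb_r1_def)
lemma r1_closed: "x \<in> carrier G \<Longrightarrow> y \<in> carrier G \<Longrightarrow> s1 x y \<in> carrier G \<and> t1 y x \<in> carrier G"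
  by (simp add: yb_r1_def)
lemma r2_closed: "x \<in> carrier G \<Longrightarrow> y \<in> carrier G \<Longrightarrow> s2 x y \<in> carrier G \<and> t2 y x \<in> carrier G"
  by (simp add: yb_r2_def)

lemma act1:
  assumes C: "x \<in> carrier G" "y \<in> carrier G" "z \<in> carrier G"
  shows "s1 x (s1 y z) = s1 (circ x y) z"
proof -
  have "s1 (circ x y) z = \<psi> (circ x y) \<otimes> z \<otimes> inv (\<psi> (circ x y))" by (simp add: s1_eq)
  also have "\<dots> = \<psi> x \<otimes> \<psi> y \<otimes> z \<otimes> inv (\<psi> x \<otimes> \<psi> y)"
    by (rule conjZ[OF Z1[of x y]]) (use C in \<open>simp_all add: circ_def gs\<close>)
  also have "\<dots> = s1 x (s1 y z)" using C by (simp add: s1_eq gs)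
  finally show ?thesis by simp
qed

lemma pres1:
  assumes C: "x \<in> carrier G" "y \<in> carrier G"
  shows "circ (s1 x y) (t1 y x) = circ x y"
proof -
  define u where "u = \<psi> x \<otimes> y \<otimes> inv (\<psi> x)"
  define v where "v = t1 y x"
  define w where "w = inv (\<psi> y) \<otimes> \<psi> x \<otimes> inv y \<otimes> inv (\<psi> x)"
  have u: "u \<in> carrier G" and w: "w \<in> carrier G" using C by (simp_all add: u_def w_def)
  have v_eq: "v = w \<otimes> x \<otimes> inv w" using C by (simp add: v_def w_def yb_r1_def gs)
  have "circ u v = u \<otimes> (\<psi> u \<otimes> v \<otimes> inv (\<psi> u))" using C u w by (simp add: circ_def v_eq gs)
  also have "\<psi> u \<otimes> v \<otimes> inv (\<psi> u) = (\<psi> u \<otimes> w) \<otimes> x \<otimes> inv (\<psi> u \<otimes> w)"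
    using C u w by (simp add: v_eq gs)
  also have "\<dots> = \<one> \<otimes> inv u \<otimes> x \<otimes> inv (\<one> \<otimes> inv u)"
    by (rule conjZ[OF Z1[of x y]]) (use C in \<open>simp_all add: u_def w_def gs\<close>)
  also have "u \<otimes> (\<one> \<otimes> inv u \<otimes> x \<otimes> inv (\<one> \<otimes> inv u)) = circ x y"
    using C by (simp add: u_def circ_def gs)
  finally show ?thesis by (simp add: u_def v_def s1_eq)
qed

lemma c2_1:
  assumes C: "x \<in> carrier G" "y \<in> carrier G" "z \<in> carrier G"
  shows "s1 x (circ y z) = circ (s1 x y) (s1 (t1 y x) z)"
proof -
  define u where "u = s1 x y"
  define v where "v = t1 y x"
  have uv: "u \<in> carrier G" "v \<in> carrier G" using r1_closed[OF C(1,2)] by (simp_all add: u_def v_def)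
  have "s1 x (circ y z) = u \<otimes> s1 x (s1 y z)" using C by (simp add: u_def s1_eq circ_def gs)
  also have "\<dots> = u \<otimes> s1 (circ u v) z" using C by (simp add: act1 pres1 u_def v_def)
  also have "\<dots> = u \<otimes> s1 u (s1 v z)" using C uv by (simp add: act1)
  also have "\<dots> = circ u (s1 v z)" using C uv by (simp add: s1_eq circ_def gs)
  finally show ?thesis by (simp add: u_def v_def)
qed

lemma B12:
  assumes C: "a \<in> carrier G" "b \<in> carrier G"
  shows "s1 (s2 a b) (t2 b a) = a"
proof -
  define p where "p = s2 a b"
  define w where "w = \<psi> a \<otimes> inv (\<psi> b) \<otimes> inv (\<psi> a)"
  have p: "p \<in> carrier G" and w: "w \<in> carrier G" using C by (simp_all add: p_def w_def yb_r2_def)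
  have q: "t2 b a = w \<otimes> a \<otimes> inv w" using C by (simp add: w_def yb_r2_def gs)
  have "s1 p (t2 b a) = (\<psi> p \<otimes> w) \<otimes> a \<otimes> inv (\<psi> p \<otimes> w)" using C p w by (simp add: s1_eq q gs)
  also have "\<dots> = \<psi> a \<otimes> inv (\<psi> a) \<otimes> a \<otimes> inv (\<psi> a \<otimes> inv (\<psi> a))"
    by (rule conjZ[OF Z1[of a b]]) (use C in \<open>simp_all add: p_def w_def yb_r2_def gs\<close>)
  also have "\<dots> = a" using C by simp
  finally show ?thesis by (simp add: p_def)
qed

lemma pres2:
  assumes C: "a \<in> carrier G" "b \<in> carrier G"
  shows "circ (s2 a b) (t2 b a) = circ a b"
proof -
  define p where "p = s2 a b"
  have p: "p \<in> carrier G" using C by (simp add: p_def yb_r2_def)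
  have "circ p (t2 b a) = p \<otimes> s1 p (t2 b a)" using C p by (simp add: circ_def s1_eq yb_r2_def gs)
  also have "\<dots> = p \<otimes> a" using B12[OF C] by (simp add: p_def)
  also have "\<dots> = circ a b" using C by (simp add: p_def circ_def yb_r2_def gs)
  finally show ?thesis by (simp add: p_def)
qed

lemma r12_id:
  assumes C: "a \<in> carrier G" "b \<in> carrier G"
  shows "yb_r1 G \<psi> (yb_r2 G \<psi> (a, b)) = (a, b)"
proof -
  define p where "p = s2 a b"
  define q where "q = t2 b a"
  have pq: "p \<in> carrier G" "q \<in> carrier G" using r2_closed[OF C] by (simp_all add: p_def q_def)
  have e2: "yb_r2 G \<psi> (a, b) = (p, q)" by (simp add: p_def q_def)
  have f: "s1 p q = a" using B12[OF C] by (simp add: p_def q_def)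
  have "circ a (t1 q p) = circ (s1 p q) (t1 q p)" by (simp only: f)
  also have "\<dots> = circ p q" by (rule pres1[OF pq])
  also have "\<dots> = circ a b" unfolding p_def q_def by (rule pres2[OF C])
  finally have "circ a (t1 q p) = circ a b" .
  moreover have tc: "t1 q p \<in> carrier G" using r1_closed[OF pq] by blast
  ultimately have "t1 q p = b" using circ_lcancel[OF C(1) tc C(2)] by blast
  thus ?thesis unfolding e2 using f by (metis prod.collapse)
qed

lemma r21_id:
  assumes C: "x \<in> carrier G" "y \<in> carrier G"
  shows "yb_r2 G \<psi> (yb_r1 G \<psi> (x, y)) = (x, y)"
proof -
  define u where "u = s1 x y"
  define v where "v = t1 y x"
  have uv: "u \<in> carrier G" "v \<in> carrier G" using r1_closed[OF C] by (simp_all add: u_def v_def)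
  have e1: "yb_r1 G \<psi> (x, y) = (u, v)" by (simp add: u_def v_def)
  have "s2 u v = circ u v \<otimes> inv u" using uv by (simp add: yb_r2_def circ_def gs)
  also have "\<dots> = x" using pres1[OF C] C by (simp add: u_def v_def s1_eq circ_def gs)
  finally have f: "s2 u v = x" .
  have "circ x (t2 v u) = circ (s2 u v) (t2 v u)" by (simp only: f)
  also have "\<dots> = circ u v" by (rule pres2[OF uv])
  also have "\<dots> = circ x y" unfolding u_def v_def by (rule pres1[OF C])
  finally have "circ x (t2 v u) = circ x y" .
  moreover have tc: "t2 v u \<in> carrier G" using r2_closed[OF uv] by blast
  ultimately have "t2 v u = y" using circ_lcancel[OF C(1) tc C(2)] by blast
  thus ?thesis unfolding e1 using f by (metis prod.collapse)
qed

lemma sol1: "nd_ybe_solution (carrier G) (yb_r1 G \<psi>)"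
proof -
  have A: "(\<forall>x\<in>carrier G. \<forall>y\<in>carrier G. \<forall>z\<in>carrier G.
        r12 (yb_r1 G \<psi>) (r23 (yb_r1 G \<psi>) (r12 (yb_r1 G \<psi>) (x, y, z))) =
        r23 (yb_r1 G \<psi>) (r12 (yb_r1 G \<psi>) (r23 (yb_r1 G \<psi>) (x, y, z))))
      \<and> ybe_nondegenerate (carrier G) (yb_r1 G \<psi>)"
    apply (rule abstract_ybe[OF circ_group, where \<sigma>=s1 and \<tau>=t1 and r="yb_r1 G \<psi>",
          simplified partial_object.select_convs monoid.select_convs])
    using r1_closed apply blast
    using r1_closed apply blast
    apply (rule act1; assumption)
    apply (rule pres1; assumption)
    apply (rule c2_1; assumption)
      apply (simp add: yb_r1_def gs)
     apply (simp add: yb_r1_def gs)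
    apply simp
    done
  have B: "bij_betw (yb_r1 G \<psi>) (carrier G \<times> carrier G) (carrier G \<times> carrier G)"
    by (rule bij_betw_byWitness[where f'="yb_r2 G \<psi>"])
       (auto simp: r12_id r21_id image_subset_iff r1_closed r2_closed mem_Times_iff)
  show ?thesis using A B by (auto simp: nd_ybe_solution_def ybe_solution_def)
qed

lemma sol2: "nd_ybe_solution (carrier G) (yb_r2 G \<psi>)"
  by (rule inverse_solution[OF sol1]) (auto simp: r12_id r21_id r2_closed mem_Times_iff)

lemma cj_comm:
  assumes "comm_group G" "a \<in> carrier G" "b \<in> carrier G"
  shows "a \<otimes> b \<otimes> inv a = b" "inv a \<otimes> b \<otimes> a = b"
proof -
  have cm: "comm_monoid G" using assms(1) by (simp add: comm_group_def)
  show "a \<otimes> b \<otimes> inv a = b" "inv a \<otimes> b \<otimes> a = b"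
    using assms comm_monoid.m_comm[OF cm, of a b] comm_monoid.m_comm[OF cm, of "inv a" b]
    by (simp_all add: m_assoc)
qed

lemma r12_comm: "(\<forall>g\<in>carrier G. \<forall>h\<in>carrier G. yb_r1 G \<psi> (g, h) = yb_r2 G \<psi> (g, h)) \<longleftrightarrow> comm_group G"
proof
  assume E: "\<forall>g\<in>carrier G. \<forall>h\<in>carrier G. yb_r1 G \<psi> (g, h) = yb_r2 G \<psi> (g, h)"
  show "comm_group G"
  proof (rule group_comm_groupI)
    fix x y assume C: "x \<in> carrier G" "y \<in> carrier G"
    define h where "h = inv (\<psi> x) \<otimes> y \<otimes> \<psi> x"
    have hc: "h \<in> carrier G" using C by (simp add: h_def)
    have "s1 x h = s2 x h" using E C hc by simp
    hence "y = x \<otimes> y \<otimes> inv x" using C by (simp add: h_def yb_r1_def yb_r2_def gs)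
    hence "y \<otimes> x = x \<otimes> y \<otimes> inv x \<otimes> x" by simp
    thus "x \<otimes> y = y \<otimes> x" using C by (simp add: gs)
  qed
next
  assume cg: "comm_group G"
  note cj = cj_comm[OF cg]
  show "\<forall>g\<in>carrier G. \<forall>h\<in>carrier G. yb_r1 G \<psi> (g, h) = yb_r2 G \<psi> (g, h)"
  proof (intro ballI)
    fix g h assume C: "g \<in> carrier G" "h \<in> carrier G"
    have 1: "s1 g h = h" using C by (simp add: yb_r1_def cj)
    have 2: "s2 g h = h"
    proof -
      have "s2 g h = g \<otimes> (\<psi> g \<otimes> h \<otimes> inv (\<psi> g)) \<otimes> inv g" using C by (simp add: yb_r2_def gs)
      thus ?thesis using C by (simp add: cj)
    qed
    have 3: "t1 h g = g"
    proof -
      have "t1 h g = inv (\<psi> h) \<otimes> (\<psi> g \<otimes> (inv h \<otimes> (inv (\<psi> g) \<otimes> g \<otimes> inv (inv (\<psi> g))) \<otimes> inv (inv h)) \<otimes> inv (\<psi> g)) \<otimes> inv (inv (\<psi> h))"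
        using C by (simp add: yb_r1_def gs)
      thus ?thesis using C by (simp add: cj)
    qed
    have 4: "t2 h g = g"
    proof -
      show ?thesis using C by (simp add: yb_r2_def cj)
    qed
    show "yb_r1 G \<psi> (g, h) = yb_r2 G \<psi> (g, h)" using 1 2 3 4 by (simp add: prod_eq_iff)
  qed
qed

lemma r34_iff:
  "(\<forall>g\<in>carrier G. \<forall>h\<in>carrier G. yb_r3 G \<psi> (g, h) = yb_r4 G \<psi> (g, h))
   \<longleftrightarrow> (\<forall>g\<in>carrier G. \<forall>h\<in>carrier G.
         g \<otimes> \<psi> g \<otimes> h \<otimes> inv (\<psi> g) = h \<otimes> \<psi> h \<otimes> g \<otimes> inv (\<psi> h))"
proof
  assume E: "\<forall>g\<in>carrier G. \<forall>h\<in>carrier G. yb_r3 G \<psi> (g, h) = yb_r4 G \<psi> (g, h)"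
  show "\<forall>g\<in>carrier G. \<forall>h\<in>carrier G. g \<otimes> \<psi> g \<otimes> h \<otimes> inv (\<psi> g) = h \<otimes> \<psi> h \<otimes> g \<otimes> inv (\<psi> h)"
  proof (intro ballI)
    fix a b assume C: "a \<in> carrier G" "b \<in> carrier G"
    have "fst (yb_r3 G \<psi> (inv b, a)) = fst (yb_r4 G \<psi> (inv b, a))" using E C by simp
    hence e: "\<psi> b \<otimes> a \<otimes> inv (\<psi> b) = inv b \<otimes> a \<otimes> \<psi> a \<otimes> b \<otimes> inv (\<psi> a)"
      using C by (simp add: yb_r3_def yb_r4_def)
    have "a \<otimes> \<psi> a \<otimes> b \<otimes> inv (\<psi> a) = b \<otimes> (inv b \<otimes> a \<otimes> \<psi> a \<otimes> b \<otimes> inv (\<psi> a))"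
      using C by (simp add: gs)
    also have "\<dots> = b \<otimes> (\<psi> b \<otimes> a \<otimes> inv (\<psi> b))" by (simp only: e)
    finally show "a \<otimes> \<psi> a \<otimes> b \<otimes> inv (\<psi> a) = b \<otimes> \<psi> b \<otimes> a \<otimes> inv (\<psi> b)"
      using C by (simp add: gs)
  qed
next
  assume Cn: "\<forall>g\<in>carrier G. \<forall>h\<in>carrier G. g \<otimes> \<psi> g \<otimes> h \<otimes> inv (\<psi> g) = h \<otimes> \<psi> h \<otimes> g \<otimes> inv (\<psi> h)"
  show "\<forall>g\<in>carrier G. \<forall>h\<in>carrier G. yb_r3 G \<psi> (g, h) = yb_r4 G \<psi> (g, h)"
  proof (intro ballI)
    fix g h assume C: "g \<in> carrier G" "h \<in> carrier G"
    have e1: "h \<otimes> \<psi> h \<otimes> inv g \<otimes> inv (\<psi> h) = inv g \<otimes> \<psi> (inv g) \<otimes> h \<otimes> inv (\<psi> (inv g))"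
      using Cn[rule_format, of h "inv g"] C by simp
    have f1: "fst (yb_r3 G \<psi> (g, h)) = fst (yb_r4 G \<psi> (g, h))"
    proof -
      have "fst (yb_r4 G \<psi> (g, h)) = g \<otimes> (h \<otimes> \<psi> h \<otimes> inv g \<otimes> inv (\<psi> h))"
        using C by (simp add: yb_r4_def gs)
      also have "\<dots> = g \<otimes> (inv g \<otimes> \<psi> (inv g) \<otimes> h \<otimes> inv (\<psi> (inv g)))" by (simp only: e1)
      also have "\<dots> = fst (yb_r3 G \<psi> (g, h))" using C by (simp add: yb_r3_def gs)
      finally show ?thesis by simp
    qed
    define L where "L = g \<otimes> \<psi> g \<otimes> (g \<otimes> h) \<otimes> inv (\<psi> g)"
    define R where "R = (g \<otimes> h) \<otimes> \<psi> (g \<otimes> h) \<otimes> g \<otimes> inv (\<psi> (g \<otimes> h))"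
    have e2: "L = R" using Cn[rule_format, of g "g \<otimes> h"] C by (simp add: L_def R_def del: hom_mult)
    have f2: "snd (yb_r3 G \<psi> (g, h)) = snd (yb_r4 G \<psi> (g, h))"
    proof -
      have "snd (yb_r3 G \<psi> (g, h)) = inv (\<psi> g) \<otimes> inv h \<otimes> inv g \<otimes> L \<otimes> \<psi> g"
        using C by (simp add: yb_r3_def L_def gs)
      also have "\<dots> = inv (\<psi> g) \<otimes> inv h \<otimes> inv g \<otimes> R \<otimes> \<psi> g" by (simp only: e2)
      also have "\<dots> = snd (yb_r4 G \<psi> (g, h))" using C by (simp add: yb_r4_def R_def gs)
      finally show ?thesis .
    qed
    show "yb_r3 G \<psi> (g, h) = yb_r4 G \<psi> (g, h)" using f1 f2 by (simp add: prod_eq_iff)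
  qed
qed

end

lemma (in group) Z_mult: "a \<in> grp_center G \<Longrightarrow> b \<in> grp_center G \<Longrightarrow> a \<otimes> b \<in> grp_center G"
proof -
  assume a: "a \<in> grp_center G" and b: "b \<in> grp_center G"
  hence ac: "a \<in> carrier G" and ca: "\<And>x. x \<in> carrier G \<Longrightarrow> a \<otimes> x = x \<otimes> a"
    and bc: "b \<in> carrier G" and cb: "\<And>x. x \<in> carrier G \<Longrightarrow> b \<otimes> x = x \<otimes> b"
    by (auto simp: grp_center_def)
  have "a \<otimes> b \<otimes> x = x \<otimes> (a \<otimes> b)" if x: "x \<in> carrier G" for x
  proof -
    have "a \<otimes> b \<otimes> x = a \<otimes> (x \<otimes> b)" using ac bc x cb by (simp add: m_assoc)
    also have "\<dots> = (x \<otimes> a) \<otimes> b" using ac bc x ca by (simp flip: m_assoc)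
    also have "\<dots> = x \<otimes> (a \<otimes> b)" using ac bc x by (simp add: m_assoc)
    finally show ?thesis .
  qed
  thus ?thesis using ac bc by (simp add: grp_center_def)
qed

lemma (in group) Z_inv: "a \<in> grp_center G \<Longrightarrow> inv a \<in> grp_center G"
proof -
  assume a: "a \<in> grp_center G"
  hence ac: "a \<in> carrier G" and c: "\<And>x. x \<in> carrier G \<Longrightarrow> a \<otimes> x = x \<otimes> a" by (auto simp: grp_center_def)
  have "inv a \<otimes> x = x \<otimes> inv a" if x: "x \<in> carrier G" for x
  proof -
    have "inv a \<otimes> x = inv a \<otimes> (x \<otimes> a) \<otimes> inv a" using ac x by (simp add: m_assoc)
    also have "\<dots> = inv a \<otimes> (a \<otimes> x) \<otimes> inv a" using c x by simp
    also have "\<dots> = x \<otimes> inv a" using ac x by (simp flip: m_assoc)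
    finally show ?thesis .
  qed
  thus ?thesis using ac by (simp add: grp_center_def)
qed

locale ybg2 = ybg +
  assumes K2: "\<And>a b. a \<in> carrier G \<Longrightarrow> b \<in> carrier G \<Longrightarrow>
       \<psi> (a \<otimes> b \<otimes> inv a \<otimes> inv\<^bsub>G\<^esub> b) \<in> grp_center G"
begin

lemma Z2: "a \<in> carrier G \<Longrightarrow> b \<in> carrier G \<Longrightarrow>
   \<psi> a \<otimes> \<psi> b \<otimes> inv (\<psi> a) \<otimes> inv (\<psi> b) \<in> grp_center G"
  using K2[of a b] by simp

abbreviation "s3 x y \<equiv> fst (yb_r3 G \<psi> (x, y))"
abbreviation "t3 y x \<equiv> snd (yb_r3 G \<psi> (x, y))"
abbreviation "s4 x y \<equiv> fst (yb_r4 G \<psi> (x, y))"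
abbreviation "t4 y x \<equiv> snd (yb_r4 G \<psi> (x, y))"

lemma r3_closed: "x \<in> carrier G \<Longrightarrow> y \<in> carrier G \<Longrightarrow> s3 x y \<in> carrier G \<and> t3 y x \<in> carrier G"
  by (simp add: yb_r3_def)
lemma r4_closed: "x \<in> carrier G \<Longrightarrow> y \<in> carrier G \<Longrightarrow> s4 x y \<in> carrier G \<and> t4 y x \<in> carrier G"
  by (simp add: yb_r4_def)

lemma act3:
  assumes C: "x \<in> carrier G" "y \<in> carrier G" "z \<in> carrier G"
  shows "s3 x (s3 y z) = s3 (x \<otimes> y) z"
proof -
  have "s3 (x \<otimes> y) z = inv (\<psi> x \<otimes> \<psi> y) \<otimes> z \<otimes> inv (inv (\<psi> x \<otimes> \<psi> y))"
    using C by (simp add: yb_r3_def gs)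
  also have "\<dots> = inv (\<psi> x) \<otimes> inv (\<psi> y) \<otimes> \<one> \<otimes> z \<otimes> inv (inv (\<psi> x) \<otimes> inv (\<psi> y) \<otimes> \<one>)"
    by (rule conjZ[OF Z2[of y x]]) (use C in \<open>simp_all add: gs\<close>)
  also have "\<dots> = s3 x (s3 y z)" using C by (simp add: yb_r3_def gs)
  finally show ?thesis by simp
qed

lemma Pt3: assumes C: "x \<in> carrier G" "y \<in> carrier G"
  shows "\<exists>k\<in>grp_center G. \<psi> (t3 y x) = k \<otimes> \<psi> x"
proof -
  define k where "k = (\<psi> (inv (\<psi> x)) \<otimes> \<psi> (inv y) \<otimes> inv (\<psi> (inv (\<psi> x))) \<otimes> inv (\<psi> (inv y)))
      \<otimes> (\<psi> (inv y) \<otimes> \<psi> x \<otimes> inv (\<psi> (inv y)) \<otimes> inv (\<psi> x))"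
  have k: "k \<in> grp_center G" unfolding k_def using C by (intro Z_mult Z2) auto
  have "\<psi> (t3 y x) = k \<otimes> \<psi> x" using C by (simp add: k_def yb_r3_def gs)
  thus ?thesis using k by blast
qed

lemma s3_t3: assumes C: "x \<in> carrier G" "y \<in> carrier G" "z \<in> carrier G"
  shows "s3 (t3 y x) z = inv (\<psi> x) \<otimes> z \<otimes> \<psi> x"
proof -
  obtain k where k: "k \<in> grp_center G" and P: "\<psi> (t3 y x) = k \<otimes> \<psi> x" using Pt3[OF C(1,2)] by blast
  have kc: "k \<in> carrier G" using k by (rule Zc)
  have "s3 (t3 y x) z = inv (\<psi> (t3 y x)) \<otimes> z \<otimes> inv (inv (\<psi> (t3 y x)))"
    using C r3_closed[OF C(1,2)] by (simp add: yb_r3_def del: hom_mult hom_inv)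
  also have "\<dots> = inv (\<psi> x) \<otimes> \<one> \<otimes> z \<otimes> inv (inv (\<psi> x) \<otimes> \<one>)"
    by (rule conjZ[OF Z_inv[OF k]]) (use C kc in \<open>simp_all add: P gs\<close>)
  also have "\<dots> = inv (\<psi> x) \<otimes> z \<otimes> \<psi> x" using C by (simp add: gs)
  finally show ?thesis .
qed

lemma pres3: "x \<in> carrier G \<Longrightarrow> y \<in> carrier G \<Longrightarrow> s3 x y \<otimes> t3 y x = x \<otimes> y"
  by (simp add: yb_r3_def gs)
lemma pres4: "x \<in> carrier G \<Longrightarrow> y \<in> carrier G \<Longrightarrow> s4 x y \<otimes> t4 y x = x \<otimes> y"
  by (simp add: yb_r4_def gs)

lemma c2_3: assumes C: "x \<in> carrier G" "y \<in> carrier G" "z \<in> carrier G"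
  shows "s3 x (y \<otimes> z) = s3 x y \<otimes> s3 (t3 y x) z"
  using C by (simp add: s3_t3) (simp add: yb_r3_def gs)

lemma r34_id: assumes C: "x \<in> carrier G" "y \<in> carrier G"
  shows "yb_r3 G \<psi> (yb_r4 G \<psi> (x, y)) = (x, y)"
proof -
  define u where "u = s4 x y"
  define v where "v = t4 y x"
  have uv: "u \<in> carrier G" "v \<in> carrier G" using r4_closed[OF C] by (simp_all add: u_def v_def)
  have e1: "yb_r4 G \<psi> (x, y) = (u, v)" by (simp add: u_def v_def)
  define c where "c = inv (\<psi> u) \<otimes> \<psi> y"
  have cc: "c \<in> carrier G" using uv C by (simp add: c_def)
  have "s3 u v = c \<otimes> x \<otimes> inv c" using C uv by (simp add: c_def v_def yb_r3_def yb_r4_def gs del: hom_mult hom_inv)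
  also have "\<dots> = \<psi> x \<otimes> (inv (\<psi> y) \<otimes> inv (\<psi> x) \<otimes> \<psi> y) \<otimes> x \<otimes> inv (\<psi> x \<otimes> (inv (\<psi> y) \<otimes> inv (\<psi> x) \<otimes> \<psi> y))"
    by (rule conjZ[OF Z_inv[OF Z1[of y "inv x"]]]) (use C in \<open>simp_all add: c_def u_def yb_r4_def gs\<close>)
  also have "\<dots> = \<one> \<otimes> \<one> \<otimes> x \<otimes> inv (\<one> \<otimes> \<one>)"
    by (rule conjZ[OF Z2[of x "inv y"]]) (use C in \<open>simp_all add: gs\<close>)
  also have "\<dots> = x" using C by simp
  finally have f: "s3 u v = x" .
  have "x \<otimes> t3 v u = s3 u v \<otimes> t3 v u" by (simp only: f)
  also have "\<dots> = u \<otimes> v" by (rule pres3[OF uv])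
  also have "\<dots> = x \<otimes> y" unfolding u_def v_def by (rule pres4[OF C])
  finally have "x \<otimes> t3 v u = x \<otimes> y" .
  moreover have tc: "t3 v u \<in> carrier G" using r3_closed[OF uv] by blast
  ultimately have "t3 v u = y" using lcancel[OF C(1) tc C(2)] by blast
  thus ?thesis unfolding e1 using f by (metis prod.collapse)
qed

lemma r43_id: assumes C: "x \<in> carrier G" "y \<in> carrier G"
  shows "yb_r4 G \<psi> (yb_r3 G \<psi> (x, y)) = (x, y)"
proof -
  define u where "u = s3 x y"
  define v where "v = t3 y x"
  have uv: "u \<in> carrier G" "v \<in> carrier G" using r3_closed[OF C] by (simp_all add: u_def v_def)
  have e1: "yb_r3 G \<psi> (x, y) = (u, v)" by (simp add: u_def v_def)
  obtain k where k: "k \<in> grp_center G" and P: "\<psi> v = k \<otimes> \<psi> x" using Pt3[OF C] by (auto simp: v_def)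
  have kc: "k \<in> carrier G" using k by (rule Zc)
  have "s4 u v = (u \<otimes> v) \<otimes> (\<psi> v \<otimes> inv u \<otimes> inv (\<psi> v))" using uv by (simp add: yb_r4_def gs del: hom_mult hom_inv)
  also have "u \<otimes> v = x \<otimes> y" unfolding u_def v_def by (rule pres3[OF C])
  also have "\<psi> v \<otimes> inv u \<otimes> inv (\<psi> v) = \<one> \<otimes> \<psi> x \<otimes> inv u \<otimes> inv (\<one> \<otimes> \<psi> x)"
    by (rule conjZ[OF k]) (use C uv kc in \<open>simp_all add: P\<close>)
  also have "x \<otimes> y \<otimes> (\<one> \<otimes> \<psi> x \<otimes> inv u \<otimes> inv (\<one> \<otimes> \<psi> x)) = x"
    using C by (simp add: u_def yb_r3_def gs)
  finally have f: "s4 u v = x" .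
  have "x \<otimes> t4 v u = s4 u v \<otimes> t4 v u" by (simp only: f)
  also have "\<dots> = u \<otimes> v" by (rule pres4[OF uv])
  also have "\<dots> = x \<otimes> y" unfolding u_def v_def by (rule pres3[OF C])
  finally have "x \<otimes> t4 v u = x \<otimes> y" .
  moreover have tc: "t4 v u \<in> carrier G" using r4_closed[OF uv] by blast
  ultimately have "t4 v u = y" using lcancel[OF C(1) tc C(2)] by blast
  thus ?thesis unfolding e1 using f by (metis prod.collapse)
qed

lemma sol3: "nd_ybe_solution (carrier G) (yb_r3 G \<psi>)"
proof -
  have A: "(\<forall>x\<in>carrier G. \<forall>y\<in>carrier G. \<forall>z\<in>carrier G.
        r12 (yb_r3 G \<psi>) (r23 (yb_r3 G \<psi>) (r12 (yb_r3 G \<psi>) (x, y, z))) =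
        r23 (yb_r3 G \<psi>) (r12 (yb_r3 G \<psi>) (r23 (yb_r3 G \<psi>) (x, y, z))))
      \<and> ybe_nondegenerate (carrier G) (yb_r3 G \<psi>)"
    apply (rule abstract_ybe[OF is_group, where \<sigma>=s3 and \<tau>=t3 and r="yb_r3 G \<psi>"])
    using r3_closed apply blast
    using r3_closed apply blast
    apply (rule act3; assumption)
    apply (rule pres3; assumption)
    apply (rule c2_3; assumption)
      apply (simp add: yb_r3_def gs)
     apply (simp add: yb_r3_def gs)
    apply simp
    done
  have B: "bij_betw (yb_r3 G \<psi>) (carrier G \<times> carrier G) (carrier G \<times> carrier G)"
    by (rule bij_betw_byWitness[where f'="yb_r4 G \<psi>"])
       (auto simp: r34_id r43_id image_subset_iff r3_closed r4_closed mem_Times_iff)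
  show ?thesis using A B by (auto simp: nd_ybe_solution_def ybe_solution_def)
qed

lemma sol4: "nd_ybe_solution (carrier G) (yb_r4 G \<psi>)"
  by (rule inverse_solution[OF sol3]) (auto simp: r34_id r43_id r4_closed mem_Times_iff)

end


theorem mainTheorem7:
  fixes G :: "('a, 'b) monoid_scheme" and \<psi> :: "'a \<Rightarrow> 'a"
  assumes grp: "group G"
    and endo: "\<psi> \<in> hom G G"
    and h1: "\<psi> ` comm_subgroup G (\<psi> ` carrier G) (carrier G) \<subseteq> grp_center G"
  shows "nd_ybe_solution (carrier G) (yb_r1 G \<psi>)
       \<and> nd_ybe_solution (carrier G) (yb_r2 G \<psi>)
       \<and> (\<forall>g\<in>carrier G. \<forall>h\<in>carrier G.
            yb_r1 G \<psi> (yb_r2 G \<psi> (g, h)) = (g, h) \<and> yb_r2 G \<psi> (yb_r1 G \<psi> (g, h)) = (g, h))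
       \<and> ((\<forall>g\<in>carrier G. \<forall>h\<in>carrier G. yb_r1 G \<psi> (g, h) = yb_r2 G \<psi> (g, h))
            \<longleftrightarrow> comm_group G)
       \<and> (\<psi> ` comm_subgroup G (carrier G) (carrier G) \<subseteq> grp_center G \<longrightarrow>
            nd_ybe_solution (carrier G) (yb_r3 G \<psi>)
          \<and> nd_ybe_solution (carrier G) (yb_r4 G \<psi>)
          \<and> (\<forall>g\<in>carrier G. \<forall>h\<in>carrier G.
               yb_r3 G \<psi> (yb_r4 G \<psi> (g, h)) = (g, h) \<and> yb_r4 G \<psi> (yb_r3 G \<psi> (g, h)) = (g, h))
          \<and> ((\<forall>g\<in>carrier G. \<forall>h\<in>carrier G. yb_r3 G \<psi> (g, h) = yb_r4 G \<psi> (g, h))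
               \<longleftrightarrow> (\<forall>g\<in>carrier G. \<forall>h\<in>carrier G.
                     g \<otimes>\<^bsub>G\<^esub> \<psi> g \<otimes>\<^bsub>G\<^esub> h \<otimes>\<^bsub>G\<^esub> inv\<^bsub>G\<^esub> (\<psi> g)
                   = h \<otimes>\<^bsub>G\<^esub> \<psi> h \<otimes>\<^bsub>G\<^esub> g \<otimes>\<^bsub>G\<^esub> inv\<^bsub>G\<^esub> (\<psi> h))))"
  proof -
  interpret group G by (rule grp)
  have K1: "\<psi> (\<psi> a \<otimes>\<^bsub>G\<^esub> b \<otimes>\<^bsub>G\<^esub> inv\<^bsub>G\<^esub> (\<psi> a) \<otimes>\<^bsub>G\<^esub> inv\<^bsub>G\<^esub> b) \<in> grp_center G"
    if ab: "a \<in> carrier G" "b \<in> carrier G" for a b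
  proof -
    have "\<psi> a \<otimes>\<^bsub>G\<^esub> b \<otimes>\<^bsub>G\<^esub> inv\<^bsub>G\<^esub> (\<psi> a) \<otimes>\<^bsub>G\<^esub> inv\<^bsub>G\<^esub> b \<in> comm_subgroup G (\<psi> ` carrier G) (carrier G)"
      unfolding comm_subgroup_def by (rule generate.incl) (use ab in blast)
    thus ?thesis using h1 by blast
  qed
  interpret Y: ybg G \<psi> by (intro ybg.intro ybg_axioms.intro grp endo K1)
  have P2: "nd_ybe_solution (carrier G) (yb_r3 G \<psi>)
          \<and> nd_ybe_solution (carrier G) (yb_r4 G \<psi>)
          \<and> (\<forall>g\<in>carrier G. \<forall>h\<in>carrier G.
               yb_r3 G \<psi> (yb_r4 G \<psi> (g, h)) = (g, h) \<and> yb_r4 G \<psi> (yb_r3 G \<psi> (g, h)) = (g, h))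
          \<and> ((\<forall>g\<in>carrier G. \<forall>h\<in>carrier G. yb_r3 G \<psi> (g, h) = yb_r4 G \<psi> (g, h))
               \<longleftrightarrow> (\<forall>g\<in>carrier G. \<forall>h\<in>carrier G.
                     g \<otimes>\<^bsub>G\<^esub> \<psi> g \<otimes>\<^bsub>G\<^esub> h \<otimes>\<^bsub>G\<^esub> inv\<^bsub>G\<^esub> (\<psi> g)
                   = h \<otimes>\<^bsub>G\<^esub> \<psi> h \<otimes>\<^bsub>G\<^esub> g \<otimes>\<^bsub>G\<^esub> inv\<^bsub>G\<^esub> (\<psi> h)))"
    if h2: "\<psi> ` comm_subgroup G (carrier G) (carrier G) \<subseteq> grp_center G"
  proof -
    have K2: "\<psi> (a \<otimes>\<^bsub>G\<^esub> b \<otimes>\<^bsub>G\<^esub> inv\<^bsub>G\<^esub> a \<otimes>\<^bsub>G\<^esub> inv\<^bsub>G\<^esub> b) \<in> grp_center G"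
      if ab: "a \<in> carrier G" "b \<in> carrier G" for a b
    proof -
      have "a \<otimes>\<^bsub>G\<^esub> b \<otimes>\<^bsub>G\<^esub> inv\<^bsub>G\<^esub> a \<otimes>\<^bsub>G\<^esub> inv\<^bsub>G\<^esub> b \<in> comm_subgroup G (carrier G) (carrier G)"
        unfolding comm_subgroup_def by (rule generate.incl) (use ab in blast)
      thus ?thesis using h2 by blast
    qed
    interpret Y2: ybg2 G \<psi> by (intro ybg2.intro ybg2_axioms.intro Y.ybg_axioms K2)
    show ?thesis
      apply (rule conjI, rule Y2.sol3)
      apply (rule conjI, rule Y2.sol4)
      apply (rule conjI)
       apply (intro ballI conjI)
        apply (erule (1) Y2.r34_id)
       apply (erule (1) Y2.r43_id)
      apply (rule Y.r34_iff)
      done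
  qed
  show ?thesis
    apply (rule conjI, rule Y.sol1)
    apply (rule conjI, rule Y.sol2)
    apply (rule conjI)
     apply (intro ballI conjI)
      apply (erule (1) Y.r12_id)
     apply (erule (1) Y.r21_id)
    apply (rule conjI, rule Y.r12_comm)
    apply (rule impI)
    apply (erule P2)
    done
qed

end
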